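(* Let $F$ be a distribution function on $[0,1]$ with a positive, non-increasing, differentiable density $g$ and non-decreasing hazard ratio $g(x)/(1-F(x))$. Let $\{f_{i,j}\}$, $f_{i,j}=f_{j,i}$, be independent with distribution $F$, let $I\subseteq[n]$, $|I|=r$, and let $D_I$ be the event that $f_{i,j}\ge (f_{i,i}+f_{j,j})/2$ for all distinct $i,j\in I$. For $C\subseteq[0,1]^r$ set $\mathrm{P}_C(D_I)=\mathrm{P}\bigl(D_I\cap\{(f_{i,i})_{i\in I}\in C\}\bigr)$. Let \[ C_1=\Bigl\{\mathbf x\in[0,1]^r:\ \Bigl|\sum_{i=1}^r F(x_i)-2\Bigr|\le r^{-1/3}\Bigr\}. \] Then, for all sufficiently large $r$, \[ \mathrm{P}(D_I)-\mathrm{P}_{C_1}(D_I)\le\left(\frac{2}{r}\right)^r\exp\Bigl(-\frac{r^{1/3}}{10}\Bigr). \]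
   Context: $\mathrm{P}_C(D_I)$ equals $\int_C\prod_{\{i,j\}\subseteq I,\,i\ne j}\bigl(1-F(\frac{x_i+x_j}{2})\bigr)\prod_{i}g(x_i)\,dx_i$. *)

theory Defs
  imports "HOL-Analysis.Analysis"
begin

definition good_distribution :: "(real \<Rightarrow> real) \<Rightarrow> (real \<Rightarrow> real) \<Rightarrow> bool" where
  "good_distribution F g \<longleftrightarrow>
     g integrable_on {0..1} \<and>
     (\<forall>x\<in>{0..1}. F x = integral {0..x} g) \<and>
     F 1 = 1 \<and>
     (\<forall>x\<in>{0..1}. g x > 0) \<and>
     antimono_on {0..1} g \<and>
     g differentiable_on {0..1} \<and>
     mono_on {0..<1} (\<lambda>x. g x / (1 - F x))"

text \<open>The diagonal entries (f_ii)_{i in I} as points of [0,1]^I.\<close>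
definition cube :: "nat set \<Rightarrow> (nat \<Rightarrow> real) set" where
  "cube I = PiE I (\<lambda>_. {0..1})"

definition PC :: "(real \<Rightarrow> real) \<Rightarrow> (real \<Rightarrow> real) \<Rightarrow> nat set \<Rightarrow> (nat \<Rightarrow> real) set \<Rightarrow> real" where
  "PC F g I C =
     (\<integral>x. (if x \<in> C then
              (\<Prod>p\<in>{(i,j). i \<in> I \<and> j \<in> I \<and> i < j}. 1 - F ((x (fst p) + x (snd p)) / 2))
              * (\<Prod>i\<in>I. g (x i))
            else 0)
        \<partial>(PiM I (\<lambda>_. restrict_space lborel {0..1})))"

definition PD :: "(real \<Rightarrow> real) \<Rightarrow> (real \<Rightarrow> real) \<Rightarrow> nat set \<Rightarrow> real" where
  "PD F g I = PC F g I (cube I)"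

definition C1 :: "(real \<Rightarrow> real) \<Rightarrow> nat set \<Rightarrow> (nat \<Rightarrow> real) set" where
  "C1 F I = {x \<in> cube I. \<bar>(\<Sum>i\<in>I. F (x i)) - 2\<bar> \<le> real (card I) powr (-1/3)}"

end

theory Submission
  imports Defs
begin

lemma gd_cont_g: "good_distribution F g \<Longrightarrow> continuous_on {0..1} g"
  unfolding good_distribution_def by (auto intro: differentiable_imp_continuous_on)

lemma gd_F: "good_distribution F g \<Longrightarrow> x \<in> {0..1} \<Longrightarrow> F x = integral {0..x} g"
  unfolding good_distribution_def by auto

lemma gd_gpos: "good_distribution F g \<Longrightarrow> x \<in> {0..1} \<Longrightarrow> g x > 0"
  unfolding good_distribution_def by auto

lemma gd_anti: "good_distribution F g \<Longrightarrow> x \<in> {0..1} \<Longrightarrow> y \<in> {0..1} \<Longrightarrow> x \<le> y \<Longrightarrow> g y \<le> g x"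
  unfolding good_distribution_def monotone_on_def by auto

lemma gd_int: "good_distribution F g \<Longrightarrow> 0 \<le> a \<Longrightarrow> b \<le> 1 \<Longrightarrow> g integrable_on {a..b}"
  by (rule integrable_continuous_real, rule continuous_on_subset[OF gd_cont_g]) auto

lemma gd_F0: "good_distribution F g \<Longrightarrow> F 0 = 0"
  using gd_F[of F g 0] by simp

lemma gd_F1: "good_distribution F g \<Longrightarrow> F 1 = 1"
  unfolding good_distribution_def by auto

lemma gd_Fdiff: assumes "good_distribution F g" "0 \<le> a" "a \<le> b" "b \<le> 1"
  shows "F b - F a = integral {a..b} g"
proof -
  have "integral {0..a} g + integral {a..b} g = integral {0..b} g"
    using Henstock_Kurzweil_Integration.integral_combine[where a=0 and c=a and b=b and f=g] assms gd_int[OF assms(1), of 0 b] by auto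
  then show ?thesis using gd_F[OF assms(1), of a] gd_F[OF assms(1), of b] assms by auto
qed

lemma gd_Fmono: assumes "good_distribution F g" "0 \<le> a" "a \<le> b" "b \<le> 1"
  shows "F a \<le> F b"
proof -
  have "0 \<le> integral {a..b} g"
    by (rule integral_nonneg) (use assms gd_int[OF assms(1)] gd_gpos[OF assms(1)] in \<open>auto intro: less_imp_le\<close>)
  then show ?thesis using gd_Fdiff[OF assms] by simp
qed

lemma gd_Fbounds: assumes "good_distribution F g" "x \<in> {0..1}"
  shows "0 \<le> F x" "F x \<le> 1"
  using gd_Fmono[OF assms(1), of 0 x] gd_Fmono[OF assms(1), of x 1] assms gd_F0[OF assms(1)] gd_F1[OF assms(1)] by auto

lemma gd_Fcont: assumes "good_distribution F g" shows "continuous_on {0..1} F"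
proof -
  have "continuous_on {0..1} (\<lambda>x. integral {0..x} g)"
    by (rule indefinite_integral_continuous_1) (use gd_int[OF assms] in auto)
  then show ?thesis by (rule continuous_on_eq) (use gd_F[OF assms] in auto)
qed

lemma gd_mid_aux: assumes "good_distribution F g" "0 \<le> a" "a \<le> b" "b \<le> 1"
  shows "(F a + F b) / 2 \<le> F ((a + b) / 2)"
proof -
  define m where "m = (a+b)/2"
  have m: "a \<le> m" "m \<le> b" using assms by (auto simp: m_def)
  have "integral {a..m} (\<lambda>_. g m) \<le> integral {a..m} g"
    by (rule integral_le) (use assms m gd_int[OF assms(1), of a m] gd_anti[OF assms(1)] in auto)
  then have 1: "(m - a) * g m \<le> F m - F a" using gd_Fdiff[OF assms(1), of a m] assms m by simp
  have "integral {m..b} g \<le> integral {m..b} (\<lambda>_. g m)"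
    by (rule integral_le) (use assms m gd_int[OF assms(1), of m b] gd_anti[OF assms(1)] in auto)
  then have 2: "F b - F m \<le> (b - m) * g m" using gd_Fdiff[OF assms(1), of m b] assms m by simp
  have "m - a = b - m" by (simp add: m_def field_simps)
  with 1 2 show ?thesis by (simp add: m_def[symmetric])
qed

lemma gd_mid: assumes "good_distribution F g" "a \<in> {0..1}" "b \<in> {0..1}"
  shows "(F a + F b) / 2 \<le> F ((a + b) / 2)"
proof (cases "a \<le> b")
  case True then show ?thesis using gd_mid_aux[OF assms(1), of a b] assms by auto
next
  case False then show ?thesis using gd_mid_aux[OF assms(1), of b a] assms by (auto simp: add.commute)
qed


lemma gd_phi_hasint: assumes gd: "good_distribution F g" and b: "b > 0"
  shows "((\<lambda>x. g x * exp (- b * F x)) has_integral (1 - exp (- b)) / b) {0..1}"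
proof -
  define G where "G u = integral {0..u} g" for u
  have dG: "(G has_real_derivative g x) (at x within {0..1})" if "x \<in> {0..1}" for x
    unfolding G_def has_real_derivative_iff_has_vector_derivative
    by (rule integral_has_vector_derivative[OF gd_cont_g[OF gd] that])
  have d: "((\<lambda>u. - exp (- b * G u) / b) has_vector_derivative g x * exp (- b * G x)) (at x within {0..1})"
    if "x \<in> {0..1}" for x
    unfolding has_real_derivative_iff_has_vector_derivative[symmetric]
    using b by (auto intro!: derivative_eq_intros dG[OF that] simp: field_simps)
  have "((\<lambda>x. g x * exp (- b * G x)) has_integral ((- exp (- b * G 1) / b) - (- exp (- b * G 0) / b))) {0..1}"
    by (rule fundamental_theorem_of_calculus) (use d in auto)
  moreover have "G 1 = 1" "G 0 = 0" using gd_F[OF gd, of 1] gd_F1[OF gd] by (auto simp: G_def)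
  moreover have "(- exp (- b * 1) / b) - (- exp (- b * 0) / b) = (1 - exp (- b)) / b"
    using b by (simp add: diff_divide_distrib)
  ultimately have "((\<lambda>x. g x * exp (- b * G x)) has_integral (1 - exp (- b)) / b) {0..1}"
    by metis
  then show ?thesis
    by (rule has_integral_eq[rotated]) (use gd_F[OF gd] in \<open>auto simp: G_def\<close>)
qed

lemma gd_phi_cont: assumes gd: "good_distribution F g"
  shows "continuous_on {0..1} (\<lambda>x. g x * exp (- b * F x))"
proof -
  have "continuous_on {0..1} (\<lambda>x. - b * F x)"
    by (intro continuous_on_mult_left gd_Fcont[OF gd])
  then have "continuous_on {0..1} (\<lambda>x. exp (- b * F x))"
    by (rule continuous_on_exp)
  then show ?thesis by (intro continuous_on_mult gd_cont_g[OF gd])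
qed

lemma gd_phi_N: assumes gd: "good_distribution F g" and b: "b > 0"
  shows "integrable (restrict_space lborel {0..1}) (\<lambda>x. g x * exp (- b * F x))"
    "integral\<^sup>L (restrict_space lborel {0..1}) (\<lambda>x. g x * exp (- b * F x)) = (1 - exp (- b)) / b"
proof -
  let ?f = "\<lambda>x. g x * exp (- b * F x)"
  have i: "integrable lborel (\<lambda>x. indicator {0..1} x *\<^sub>R ?f x)"
    by (rule borel_integrable_compact[OF compact_Icc gd_phi_cont[OF gd]])
  then show "integrable (restrict_space lborel {0..1}) ?f"
    by (subst integrable_restrict_space) auto
  have "integral\<^sup>L (restrict_space lborel {0..1}) ?f = (LINT x : {0..1} | lborel. ?f x)"
    by (subst integral_restrict_space) (auto simp: set_lebesgue_integral_def)
  also have "\<dots> = integral {0..1} ?f"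
    by (rule set_borel_integral_eq_integral(2)) (use i in \<open>simp add: set_integrable_def\<close>)
  also have "\<dots> = (1 - exp (- b)) / b"
    using gd_phi_hasint[OF gd b] by (rule integral_unique)
  finally show "integral\<^sup>L (restrict_space lborel {0..1}) ?f = (1 - exp (- b)) / b" .
qed


lemma ln_upper3: fixes t :: real assumes "0 \<le> t" shows "ln (1 + t) \<le> t - t^2/2 + t^3/3"
proof -
  let ?f = "\<lambda>x::real. x - x^2/2 + x^3/3 - ln (1 + x)"
  have "?f 0 \<le> ?f t"
  proof (rule DERIV_nonneg_imp_nondecreasing[OF assms])
    fix x :: real assume x: "0 \<le> x" "x \<le> t"
    have "DERIV ?f x :> 1 - x + x^2 - 1 / (1 + x)"
      using x by (auto intro!: derivative_eq_intros simp: power2_eq_square field_simps)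
    moreover have "1 - x + x^2 - 1 / (1 + x) = x^3 / (1 + x)"
      using x by (simp add: field_simps power2_eq_square power3_eq_cube)
    ultimately have "DERIV ?f x :> x^3 / (1 + x)" by simp
    moreover have "x^3 / (1 + x) \<ge> 0" using x by simp
    ultimately show "\<exists>y. DERIV ?f x :> y \<and> y \<ge> 0" by blast
  qed
  then show ?thesis by simp
qed

lemma ln_upper2m: fixes t :: real assumes "0 \<le> t" "t < 1" shows "ln (1 - t) \<le> - t - t^2/2"
proof -
  let ?f = "\<lambda>x::real. - x - x^2/2 - ln (1 - x)"
  have "?f 0 \<le> ?f t"
  proof (rule DERIV_nonneg_imp_nondecreasing[OF assms(1)])
    fix x :: real assume x: "0 \<le> x" "x \<le> t"
    have "DERIV ?f x :> - 1 - x + 1 / (1 - x)"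
      using x assms by (auto intro!: derivative_eq_intros simp: power2_eq_square field_simps)
    moreover have "- 1 - x + 1 / (1 - x) = x^2 / (1 - x)"
      using x assms by (simp add: field_simps power2_eq_square)
    ultimately have "DERIV ?f x :> x^2 / (1 - x)" by simp
    moreover have "x^2 / (1 - x) \<ge> 0" using x assms by simp
    ultimately show "\<exists>y. DERIV ?f x :> y \<and> y \<ge> 0" by blast
  qed
  then show ?thesis by simp
qed

lemma pair_sum:
  fixes u :: "nat \<Rightarrow> real"
  assumes "finite I"
  shows "(\<Sum>p\<in>{(i,j). i \<in> I \<and> j \<in> I \<and> i < j}. u (fst p) + u (snd p)) = (real (card I) - 1) * (\<Sum>i\<in>I. u i)"
proof -
  define P where "P = {(i,j). i \<in> I \<and> j \<in> I \<and> i < j}"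
  define Q where "Q = {(i,j). i \<in> I \<and> j \<in> I \<and> j < i}"
  define D where "D = {(i,j). i \<in> I \<and> j \<in> I \<and> i = j}"
  define s where "s p = u (fst p) + u (snd p)" for p
  have fin: "finite P" "finite Q" "finite D"
    using assms by (auto simp: P_def Q_def D_def intro: finite_subset[of _ "I \<times> I"])
  have II: "I \<times> I = (P \<union> Q) \<union> D" by (auto simp: P_def Q_def D_def)
  have "sum s (I \<times> I) = sum s (P \<union> Q) + sum s D"
    unfolding II by (rule sum.union_disjoint) (use fin in \<open>auto simp: P_def Q_def D_def\<close>)
  also have "sum s (P \<union> Q) = sum s P + sum s Q"
    by (rule sum.union_disjoint) (use fin in \<open>auto simp: P_def Q_def\<close>)
  also have "Q = prod.swap ` P" by (auto simp: P_def Q_def image_iff)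
  then have "sum s Q = sum (s \<circ> prod.swap) P" by (simp add: sum.reindex)
  also have "sum (s \<circ> prod.swap) P = sum s P" by (simp add: s_def add.commute)
  also have "D = (\<lambda>i. (i,i)) ` I" by (auto simp: D_def)
  then have "sum s D = (\<Sum>i\<in>I. 2 * u i)" by (simp add: sum.reindex inj_on_def s_def)
  finally have 1: "sum s (I \<times> I) = 2 * sum s P + (\<Sum>i\<in>I. 2 * u i)" by simp
  have "sum s (I \<times> I) = (\<Sum>i\<in>I. \<Sum>j\<in>I. u i + u j)"
    by (simp add: sum.cartesian_product s_def split_beta')
  also have "\<dots> = (\<Sum>i\<in>I. real (card I) * u i + sum u I)" by (simp add: sum.distrib)
  also have "\<dots> = 2 * real (card I) * sum u I" by (simp add: sum.distrib sum_distrib_left mult.assoc)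
  finally have 2: "sum s (I \<times> I) = 2 * real (card I) * sum u I" .
  have 3: "(\<Sum>i\<in>I. 2 * u i) = 2 * sum u I" by (simp add: sum_distrib_left)
  from 1 2 3 have "sum s P = (real (card I) - 1) * sum u I"
    by (simp add: algebra_simps)
  then show ?thesis by (simp add: P_def s_def)
qed


lemma numeric_bound:
  fixes r :: nat
  assumes r: "real r \<ge> 120^3"
  defines "\<delta> \<equiv> real r powr (-1/3)"
  defines "a \<equiv> (real r - 1) / 2"
  defines "b1 \<equiv> real r / (2 + \<delta>)"
  defines "b2 \<equiv> real r / (2 - \<delta>)"
  shows "0 \<le> a - b1" "0 \<le> b2 - a" "0 < b1" "0 < b2"
    "exp (- (a - b1) * (2 + \<delta>)) * (1 / b1) ^ r + exp ((b2 - a) * (2 - \<delta>)) * (1 / b2) ^ r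
       \<le> (2 / real r) ^ r * exp (- (real r powr (1/3)) / 10)"
proof -
  define s where "s = real r powr (1/3)"
  have rpos: "real r > 0" using r by simp
  have s0: "s > 0" using rpos by (simp add: s_def)
  have s3: "s ^ 3 = real r"
    using rpos by (simp add: s_def powr_realpow[symmetric] powr_powr)
  have s120: "s \<ge> 120"
  proof (rule ccontr)
    assume "\<not> s \<ge> 120"
    then have "s ^ 3 < 120 ^ 3" using s0 by (intro power_strict_mono) auto
    with s3 r show False by simp
  qed
  have d: "\<delta> = 1 / s"
    using rpos by (simp add: \<delta>_def s_def powr_minus_divide[symmetric])
  define t where "t = 1 / (2 * s)"
  have inv_s_aux: "1 / s < 2" "0 < 1 / s" using s120 by (simp_all add: field_simps)
  have t0: "0 \<le> t" "t < 1" using s120 by (auto simp: t_def)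
  have dt: "\<delta> = 2 * t" by (simp add: d t_def)
  have dpos: "2 + \<delta> \<noteq> 0" "2 - \<delta> \<noteq> 0" using inv_s_aux unfolding d by linarith+
  have b1: "b1 = s^3 / (2 + 1/s)" by (simp add: b1_def d s3)
  have b2: "b2 = s^3 / (2 - 1/s)" by (simp add: b2_def d s3)
  have a: "a = (s^3 - 1) / 2" by (simp add: a_def s3)
  have inv_s: "1 / s < 2" "0 < 1 / s" using s120 by (simp_all add: field_simps)
  have "0 < 2 + 1 / s" "0 < 2 - 1 / s" using inv_s by linarith+
  then show "0 < b1" "0 < b2" using s0 unfolding b1 b2 by (auto intro!: divide_pos_pos)
  have "s^3 \<ge> 2 * s + 1"
  proof -
    have "s^3 = s * s * s" by (simp add: power3_eq_cube)
    also have "\<dots> \<ge> 120 * 120 * s" using s120 s0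
      by (intro mult_right_mono mult_mono) auto
    finally show ?thesis using s120 by simp
  qed
  then show "0 \<le> a - b1" using s120
    by (simp add: a b1 field_simps power3_eq_cube power2_eq_square)
  show "0 \<le> b2 - a" using s120
    by (simp add: a b2 field_simps power3_eq_cube power2_eq_square) (use mult_pos_pos[OF s0 mult_pos_pos[OF s0 s0]] in linarith)
  have q1: "1 / b1 = (2 / real r) * (1 + t)"
    using s0 rpos by (simp add: b1_def d t_def field_simps)
  have q2: "1 / b2 = (2 / real r) * (1 - t)"
    using s0 rpos s120 by (simp add: b2_def d t_def field_simps)
  have p1: "(1 + t) ^ r = exp (real r * ln (1 + t))"
    using t0 by (simp add: exp_of_nat_mult)
  have p2: "(1 - t) ^ r = exp (real r * ln (1 - t))"
    using t0 by (simp add: exp_of_nat_mult)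
  have e1: "- (a - b1) * (2 + \<delta>) + real r * ln (1 + t) \<le> 2 - s / 8"
  proof -
    have "real r * ln (1 + t) \<le> real r * (t - t^2/2 + t^3/3)"
      using ln_upper3[OF t0(1)] by (intro mult_left_mono) auto
    moreover have "- (a - b1) * (2 + \<delta>) + real r * (t - t^2/2 + t^3/3) = 1 + t - s/8 + 1/24"
    proof -
      have "- (a - b1) * (2 + \<delta>) + real r * (t - t^2/2 + t^3/3)
          = b1 * (2 + \<delta>) - a * (2 + \<delta>) + real r * t - (real r * t^2)/2 + (real r * t^3) / 3"
        by (simp add: algebra_simps)
      also have "b1 * (2 + \<delta>) = real r" using dpos by (simp add: b1_def)
      also have "a * (2 + \<delta>) = (real r - 1) * (1 + t)" by (simp add: a_def dt field_simps)
      also have "real r * t^2 = s / 4" using s0 by (simp add: t_def s3[symmetric] field_simps power3_eq_cube power2_eq_square)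
      also have "real r * t^3 = 1 / 8" using s0 by (simp add: t_def s3[symmetric] field_simps power3_eq_cube)
      finally show ?thesis by (simp add: algebra_simps)
    qed
    moreover have "t \<le> 1/2" using s120 by (simp add: t_def)
    ultimately show ?thesis by linarith
  qed
  have e2: "(b2 - a) * (2 - \<delta>) + real r * ln (1 - t) \<le> 2 - s / 8"
  proof -
    have "real r * ln (1 - t) \<le> real r * (- t - t^2/2)"
      using ln_upper2m[OF t0] by (intro mult_left_mono) auto
    moreover have "(b2 - a) * (2 - \<delta>) + real r * (- t - t^2/2) = 1 - t - s/8"
    proof -
      have "(b2 - a) * (2 - \<delta>) + real r * (- t - t^2/2)
          = b2 * (2 - \<delta>) - a * (2 - \<delta>) - real r * t - (real r * t^2)/2"
        by (simp add: algebra_simps)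
      also have "b2 * (2 - \<delta>) = real r" using dpos by (simp add: b2_def)
      also have "a * (2 - \<delta>) = (real r - 1) * (1 - t)" by (simp add: a_def dt field_simps)
      also have "real r * t^2 = s / 4" using s0 by (simp add: t_def s3[symmetric] field_simps power3_eq_cube power2_eq_square)
      finally show ?thesis by (simp add: algebra_simps)
    qed
    ultimately show ?thesis using t0 by linarith
  qed
  have "exp (- (a - b1) * (2 + \<delta>)) * (1 / b1) ^ r
        = (2 / real r) ^ r * exp (- (a - b1) * (2 + \<delta>) + real r * ln (1 + t))"
  proof -
    have "(1 / b1) ^ r = (2 / real r) ^ r * exp (real r * ln (1 + t))"
      by (simp only: q1 power_mult_distrib p1)
    then show ?thesis unfolding exp_add by (simp add: ac_simps)
  qed
  also have "\<dots> \<le> (2 / real r) ^ r * exp (2 - s / 8)"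
    using e1 by (intro mult_left_mono) auto
  finally have T1: "exp (- (a - b1) * (2 + \<delta>)) * (1 / b1) ^ r \<le> (2 / real r) ^ r * exp (2 - s / 8)" .
  have "exp ((b2 - a) * (2 - \<delta>)) * (1 / b2) ^ r
        = (2 / real r) ^ r * exp ((b2 - a) * (2 - \<delta>) + real r * ln (1 - t))"
  proof -
    have "(1 / b2) ^ r = (2 / real r) ^ r * exp (real r * ln (1 - t))"
      by (simp only: q2 power_mult_distrib p2)
    then show ?thesis unfolding exp_add by (simp add: ac_simps)
  qed
  also have "\<dots> \<le> (2 / real r) ^ r * exp (2 - s / 8)"
    using e2 by (intro mult_left_mono) auto
  finally have T2: "exp ((b2 - a) * (2 - \<delta>)) * (1 / b2) ^ r \<le> (2 / real r) ^ r * exp (2 - s / 8)" .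
  have "2 * exp (2 - s / 8) \<le> exp (- s / 10)"
  proof -
    have "2 \<le> exp (1::real)" using exp_ge_add_one_self[of 1] by simp
    also have "exp (1::real) \<le> exp (s/40 - 2)" using s120 by simp
    finally have "2 * exp (2 - s / 8) \<le> exp (s/40 - 2) * exp (2 - s/8)" by simp
    also have "\<dots> = exp (- s / 10)" by (simp add: exp_add[symmetric])
    finally show ?thesis .
  qed
  then have "(2 / real r) ^ r * exp (2 - s / 8) + (2 / real r) ^ r * exp (2 - s / 8)
      \<le> (2 / real r) ^ r * exp (- s / 10)"
    by (simp add: mult_left_mono flip: distrib_left)
  with T1 T2 show "exp (- (a - b1) * (2 + \<delta>)) * (1 / b1) ^ r + exp ((b2 - a) * (2 - \<delta>)) * (1 / b2) ^ r
       \<le> (2 / real r) ^ r * exp (- (real r powr (1/3)) / 10)"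
    by (simp add: s_def)
qed


abbreviation NN :: "real measure" where "NN \<equiv> restrict_space lborel {0..1}"

lemma NN_sf: "product_sigma_finite (\<lambda>_::nat. NN)"
  unfolding product_sigma_finite_def
  by (auto intro!: sigma_finite_measure_restrict_space lborel.sigma_finite_measure_axioms)

lemma space_NN: "space NN = {0..1}" by (simp add: space_restrict_space)

lemma space_MM: "x \<in> space (PiM I (\<lambda>_. NN)) \<Longrightarrow> i \<in> I \<Longrightarrow> x i \<in> {0..1}"
  by (auto simp: space_PiM space_NN PiE_iff)

lemma space_MM_cube: "space (PiM I (\<lambda>_. NN)) = cube I"
  by (simp add: space_PiM space_NN cube_def)

lemma comp_meas: "i \<in> I \<Longrightarrow> (\<lambda>x. x i) \<in> borel_measurable (PiM I (\<lambda>_. NN))"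
proof -
  assume i: "i \<in> I"
  have "(\<lambda>x::real. x) \<in> measurable NN borel"
    by (intro measurable_restrict_space1) simp
  then show ?thesis using measurable_component_singleton[OF i, of "\<lambda>_. NN"]
    by (rule measurable_compose[rotated])
qed

lemma cont_comp_meas:
  fixes h :: "real \<Rightarrow> real"
  assumes h: "continuous_on {0..1} h" and f: "f \<in> borel_measurable M"
    and fs: "\<And>x. x \<in> space M \<Longrightarrow> f x \<in> {0..1}"
  shows "(\<lambda>x. h (f x)) \<in> borel_measurable M"
proof -
  define c where "c t = max 0 (min 1 t)" for t :: real
  have cc: "continuous_on UNIV c" unfolding c_def by (intro continuous_intros)
  have c01: "c t \<in> {0..1}" for t by (auto simp: c_def)
  have "continuous_on UNIV (h \<circ> c)"
    by (rule continuous_on_compose[OF cc continuous_on_subset[OF h]]) (use c01 in auto)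
  then have "(h \<circ> c) \<in> borel_measurable borel" by (rule borel_measurable_continuous_onI)
  then have "(\<lambda>x. (h \<circ> c) (f x)) \<in> borel_measurable M" using f by (rule measurable_compose[rotated])
  then show ?thesis
    by (rule measurable_cong[THEN iffD1, rotated]) (use fs in \<open>auto simp: c_def\<close>)
qed

lemma cont_int_NN: "continuous_on {0..1} h \<Longrightarrow> integrable NN (h :: real \<Rightarrow> real)"
  by (subst integrable_restrict_space) (use borel_integrable_compact[OF compact_Icc, of 0 1 h] in auto)

lemma pair_prod_bound:
  fixes I :: "nat set"
  assumes gd: "good_distribution F g" and fin: "finite I" and x: "\<And>i. i \<in> I \<Longrightarrow> x i \<in> {0..1}"
  shows "0 \<le> (\<Prod>p\<in>{(i,j). i \<in> I \<and> j \<in> I \<and> i < j}. 1 - F ((x (fst p) + x (snd p)) / 2))"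
    "(\<Prod>p\<in>{(i,j). i \<in> I \<and> j \<in> I \<and> i < j}. 1 - F ((x (fst p) + x (snd p)) / 2)) \<le> 1"
    "(\<Prod>p\<in>{(i,j). i \<in> I \<and> j \<in> I \<and> i < j}. 1 - F ((x (fst p) + x (snd p)) / 2))
       \<le> exp (- ((real (card I) - 1) / 2 * (\<Sum>i\<in>I. F (x i))))"
proof -
  define P where "P = {(i,j). i \<in> I \<and> j \<in> I \<and> i < j}"
  have finP: "finite P" using fin by (auto simp: P_def intro: finite_subset[of _ "I \<times> I"])
  have fac: "0 \<le> 1 - F ((x (fst p) + x (snd p)) / 2) \<and> 1 - F ((x (fst p) + x (snd p)) / 2) \<le> 1
     \<and> 1 - F ((x (fst p) + x (snd p)) / 2) \<le> exp (- ((F (x (fst p)) + F (x (snd p))) / 2))"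
    if p: "p \<in> P" for p
  proof -
    have xi: "x (fst p) \<in> {0..1}" "x (snd p) \<in> {0..1}" using p x by (auto simp: P_def)
    then have m: "(x (fst p) + x (snd p)) / 2 \<in> {0..1}" by auto
    have "1 - F ((x (fst p) + x (snd p)) / 2) \<le> 1 + (- ((F (x (fst p)) + F (x (snd p))) / 2))"
      using gd_mid[OF gd xi] by simp
    also have "\<dots> \<le> exp (- ((F (x (fst p)) + F (x (snd p))) / 2))" by (rule exp_ge_add_one_self)
    finally show ?thesis using gd_Fbounds[OF gd m] gd_Fbounds[OF gd xi(1)] gd_Fbounds[OF gd xi(2)] by auto
  qed
  show "0 \<le> (\<Prod>p\<in>{(i,j). i \<in> I \<and> j \<in> I \<and> i < j}. 1 - F ((x (fst p) + x (snd p)) / 2))"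
    unfolding P_def[symmetric] using fac by (intro prod_nonneg) auto
  show "(\<Prod>p\<in>{(i,j). i \<in> I \<and> j \<in> I \<and> i < j}. 1 - F ((x (fst p) + x (snd p)) / 2)) \<le> 1"
    unfolding P_def[symmetric] using fac by (intro prod_le_1) auto
  have "(\<Prod>p\<in>P. 1 - F ((x (fst p) + x (snd p)) / 2)) \<le> (\<Prod>p\<in>P. exp (- ((F (x (fst p)) + F (x (snd p))) / 2)))"
    using fac by (intro prod_mono) auto
  also have "\<dots> = exp (\<Sum>p\<in>P. - ((F (x (fst p)) + F (x (snd p))) / 2))"
    using finP by (simp add: exp_sum)
  also have "(\<Sum>p\<in>P. - ((F (x (fst p)) + F (x (snd p))) / 2)) = - ((\<Sum>p\<in>P. F (x (fst p)) + F (x (snd p))) / 2)"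
    by (simp add: sum_negf sum_divide_distrib)
  also have "(\<Sum>p\<in>P. F (x (fst p)) + F (x (snd p))) = (real (card I) - 1) * (\<Sum>i\<in>I. F (x i))"
    unfolding P_def by (rule pair_sum[OF fin, of "\<lambda>i. F (x i)"])
  finally show "(\<Prod>p\<in>{(i,j). i \<in> I \<and> j \<in> I \<and> i < j}. 1 - F ((x (fst p) + x (snd p)) / 2))
       \<le> exp (- ((real (card I) - 1) / 2 * (\<Sum>i\<in>I. F (x i))))"
    by (simp add: P_def)
qed


theorem lemma2p3:
  fixes F g :: "real \<Rightarrow> real"
  assumes "good_distribution F g"
  shows "\<exists>R::nat. \<forall>r\<ge>R. \<forall>(n::nat) (I::nat set). I \<subseteq> {1..n} \<longrightarrow> card I = r \<longrightarrow>
           PD F g I - PC F g I (C1 F I) \<le> (2 / real r) ^ r * exp (- (real r powr (1/3)) / 10)"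
proof (intro exI[of _ "1728000::nat"] allI impI)
  note gd = assms
  fix r n :: nat and I :: "nat set"
  assume rR: "r \<ge> 1728000" and IS: "I \<subseteq> {1..n}" and cI: "card I = r"
  have fin: "finite I" using IS finite_subset by blast
  let ?M = "PiM I (\<lambda>_. NN)"
  interpret ps: product_sigma_finite "\<lambda>_::nat. NN" by (rule NN_sf)
  have r3: "real r \<ge> 120^3" using rR by simp
  define \<delta> where "\<delta> = real r powr (-1/3)"
  define a where "a = (real r - 1) / 2"
  define b1 where "b1 = real r / (2 + \<delta>)"
  define b2 where "b2 = real r / (2 - \<delta>)"
  note num = numeric_bound[OF r3, folded \<delta>_def a_def, folded b1_def b2_def]
  define K1 where "K1 = exp (- (a - b1) * (2 + \<delta>))"
  define K2 where "K2 = exp ((b2 - a) * (2 - \<delta>))"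
  define P where "P x = (\<Prod>p\<in>{(i,j). i \<in> I \<and> j \<in> I \<and> i < j}. 1 - F ((x (fst p) + x (snd p)) / 2))" for x :: "nat \<Rightarrow> real"
  define G where "G x = (\<Prod>i\<in>I. g (x i))" for x :: "nat \<Rightarrow> real"
  define S where "S x = (\<Sum>i\<in>I. F (x i))" for x :: "nat \<Rightarrow> real"
  define \<phi> where "\<phi> b t = g t * exp (- b * F t)" for b t :: real
  define \<Psi> where "\<Psi> x = K1 * (\<Prod>i\<in>I. \<phi> b1 (x i)) + K2 * (\<Prod>i\<in>I. \<phi> b2 (x i))" for x
  define f1 where "f1 x = (if x \<in> cube I then P x * G x else 0)" for x
  define f2 where "f2 x = (if x \<in> C1 F I then P x * G x else 0)" for x
  have PD_eq: "PD F g I = integral\<^sup>L ?M f1"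
    unfolding PD_def PC_def f1_def[abs_def] P_def[abs_def] G_def[abs_def] by (rule refl)
  have PC_eq: "PC F g I (C1 F I) = integral\<^sup>L ?M f2"
    unfolding PC_def f2_def[abs_def] P_def[abs_def] G_def[abs_def] by (rule refl)
  have sp: "\<And>x i. x \<in> space ?M \<Longrightarrow> i \<in> I \<Longrightarrow> x i \<in> {0..1}" by (rule space_MM)
  have Pm: "P \<in> borel_measurable ?M"
    unfolding P_def
  proof (intro borel_measurable_prod borel_measurable_diff borel_measurable_const)
    fix p assume p: "p \<in> {(i,j). i \<in> I \<and> j \<in> I \<and> i < j}"
    then have pI: "fst p \<in> I" "snd p \<in> I" by auto
    show "(\<lambda>x. F ((x (fst p) + x (snd p)) / 2)) \<in> borel_measurable ?M"
    proof (rule cont_comp_meas[OF gd_Fcont[OF gd]])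
      show "(\<lambda>x. (x (fst p) + x (snd p)) / 2) \<in> borel_measurable ?M"
        using comp_meas[OF pI(1)] comp_meas[OF pI(2)] by measurable
      fix x assume "x \<in> space ?M"
      then have "x (fst p) \<in> {0..1}" "x (snd p) \<in> {0..1}" using sp pI by auto
      then show "(x (fst p) + x (snd p)) / 2 \<in> {0..1}" by auto
    qed
  qed
  have Gm: "G \<in> borel_measurable ?M"
    unfolding G_def
    by (intro borel_measurable_prod cont_comp_meas[OF gd_cont_g[OF gd]] comp_meas) (auto simp: space_PiM space_NN PiE_iff)
  have Sm: "S \<in> borel_measurable ?M"
    unfolding S_def
    by (intro borel_measurable_sum cont_comp_meas[OF gd_Fcont[OF gd]] comp_meas) (auto simp: space_PiM space_NN PiE_iff)
  have PGm: "(\<lambda>x. P x * G x) \<in> borel_measurable ?M" using Pm Gm by measurable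
  have Pb: "0 \<le> P x" "P x \<le> 1" "P x \<le> exp (- (a * S x))" if "x \<in> space ?M" for x
    using pair_prod_bound[OF gd fin, of x] sp[OF that] by (auto simp: P_def S_def a_def cI)
  have Gpos: "0 \<le> G x" if "x \<in> space ?M" for x
    unfolding G_def using sp[OF that] gd_gpos[OF gd] by (intro prod_nonneg) (auto intro: less_imp_le)
  have f1m: "f1 \<in> borel_measurable ?M"
    by (rule measurable_cong[THEN iffD1, OF _ PGm]) (auto simp: f1_def space_MM_cube)
  have f2m: "f2 \<in> borel_measurable ?M"
  proof -
    have "(\<lambda>x. if \<bar>S x - 2\<bar> \<le> \<delta> then P x * G x else 0) \<in> borel_measurable ?M"
      using PGm Sm by measurable
    then show ?thesis
      by (rule measurable_cong[THEN iffD1, rotated])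
        (auto simp: f2_def C1_def space_MM_cube S_def \<delta>_def cI)
  qed
  have Gint: "integrable ?M G"
    unfolding G_def by (rule ps.product_integrable_prod[OF fin cont_int_NN[OF gd_cont_g[OF gd]]])
  have f1int: "integrable ?M f1"
  proof (rule Bochner_Integration.integrable_bound[OF Gint f1m], rule AE_I2)
    fix x assume x: "x \<in> space ?M"
    show "norm (f1 x) \<le> norm (G x)"
      using Pb[OF x] Gpos[OF x] by (auto simp: f1_def abs_mult intro: mult_left_le_one_le)
  qed
  have f2int: "integrable ?M f2"
  proof (rule Bochner_Integration.integrable_bound[OF Gint f2m], rule AE_I2)
    fix x assume x: "x \<in> space ?M"
    show "norm (f2 x) \<le> norm (G x)"
      using Pb[OF x] Gpos[OF x] by (auto simp: f2_def abs_mult intro: mult_left_le_one_le)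
  qed
  have phiint: "integrable NN (\<phi> b)" for b
    unfolding \<phi>_def by (rule cont_int_NN[OF gd_phi_cont[OF gd]])
  have prodint: "integrable ?M (\<lambda>x. \<Prod>i\<in>I. \<phi> b (x i))" for b
    by (rule ps.product_integrable_prod[OF fin phiint])
  have prodval: "integral\<^sup>L ?M (\<lambda>x. \<Prod>i\<in>I. \<phi> b (x i)) \<le> (1 / b) ^ r" if b: "b > 0" for b
  proof -
    have "integral\<^sup>L ?M (\<lambda>x. \<Prod>i\<in>I. \<phi> b (x i)) = (\<Prod>i\<in>I. integral\<^sup>L NN (\<phi> b))"
      by (rule ps.product_integral_prod[OF fin phiint])
    also have "\<dots> = ((1 - exp (- b)) / b) ^ r"
      using gd_phi_N(2)[OF gd b] by (simp add: \<phi>_def[abs_def] cI)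
    also have "\<dots> \<le> (1 / b) ^ r"
      using b by (intro power_mono divide_right_mono) auto
    finally show ?thesis .
  qed
  have Psiint: "integrable ?M \<Psi>"
    unfolding \<Psi>_def by (intro Bochner_Integration.integrable_add Bochner_Integration.integrable_mult_right prodint)
  have Psival: "integral\<^sup>L ?M \<Psi> \<le> K1 * (1 / b1) ^ r + K2 * (1 / b2) ^ r"
  proof -
    have "integral\<^sup>L ?M \<Psi> = K1 * integral\<^sup>L ?M (\<lambda>x. \<Prod>i\<in>I. \<phi> b1 (x i)) + K2 * integral\<^sup>L ?M (\<lambda>x. \<Prod>i\<in>I. \<phi> b2 (x i))"
      unfolding \<Psi>_def by (simp add: prodint)
    also have "\<dots> \<le> K1 * (1 / b1) ^ r + K2 * (1 / b2) ^ r"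
      using prodval[OF num(3)] prodval[OF num(4)]
      by (intro add_mono mult_left_mono) (auto simp: K1_def K2_def)
    finally show ?thesis .
  qed
  have prodphi: "(\<Prod>i\<in>I. \<phi> b (x i)) = G x * exp (- b * S x)" for b x
    by (simp add: \<phi>_def G_def S_def prod.distrib exp_sum[OF fin, symmetric] sum_negf sum_distrib_left)
  have phinn: "0 \<le> (\<Prod>i\<in>I. \<phi> b (x i))" if "x \<in> space ?M" for b x
    unfolding prodphi using Gpos[OF that] by simp
  have pw: "f1 x - f2 x \<le> \<Psi> x" if x: "x \<in> space ?M" for x
  proof -
    have xc: "x \<in> cube I" using x by (simp add: space_MM_cube)
    have T1: "0 \<le> K1 * (\<Prod>i\<in>I. \<phi> b1 (x i))" "0 \<le> K2 * (\<Prod>i\<in>I. \<phi> b2 (x i))"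
      using phinn[OF x] by (auto simp: K1_def K2_def)
    show ?thesis
    proof (cases "x \<in> C1 F I")
      case True
      then show ?thesis using T1 xc by (simp add: f1_def f2_def \<Psi>_def)
    next
      case False
      then have Sd: "\<not> \<bar>S x - 2\<bar> \<le> \<delta>" using xc by (simp add: C1_def S_def \<delta>_def cI)
      have diff: "f1 x - f2 x = P x * G x" using False xc by (simp add: f1_def f2_def)
      have PG: "P x * G x \<le> G x * exp (- (a * S x))"
        using Pb[OF x] Gpos[OF x] by (simp add: mult.commute mult_left_mono)
      show ?thesis
      proof (cases "S x \<ge> 2 + \<delta>")
        case True
        have "(a - b1) * (2 + \<delta>) \<le> (a - b1) * S x" using True num(1) by (intro mult_left_mono) auto
        then have "- (a * S x) \<le> - (a - b1) * (2 + \<delta>) + (- b1 * S x)" by (simp add: algebra_simps)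
        then have "G x * exp (- (a * S x)) \<le> G x * (K1 * exp (- b1 * S x))"
          using Gpos[OF x] by (auto simp: K1_def exp_add[symmetric] intro!: mult_left_mono)
        also have "\<dots> = K1 * (\<Prod>i\<in>I. \<phi> b1 (x i))" by (simp add: prodphi)
        finally show ?thesis using diff PG T1 by (simp add: \<Psi>_def)
      next
        case False
        with Sd have S2: "S x \<le> 2 - \<delta>" by auto
        have "(b2 - a) * S x \<le> (b2 - a) * (2 - \<delta>)" using S2 num(2) by (intro mult_left_mono) auto
        then have "- (a * S x) \<le> (b2 - a) * (2 - \<delta>) + (- b2 * S x)" by (simp add: algebra_simps)
        then have "G x * exp (- (a * S x)) \<le> G x * (K2 * exp (- b2 * S x))"
          using Gpos[OF x] by (auto simp: K2_def exp_add[symmetric] intro!: mult_left_mono)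
        also have "\<dots> = K2 * (\<Prod>i\<in>I. \<phi> b2 (x i))" by (simp add: prodphi)
        finally show ?thesis using diff PG T1 by (simp add: \<Psi>_def)
      qed
    qed
  qed
  have "PD F g I - PC F g I (C1 F I) = integral\<^sup>L ?M (\<lambda>x. f1 x - f2 x)"
    unfolding PD_eq PC_eq by (rule Bochner_Integration.integral_diff[OF f1int f2int, symmetric])
  also have "\<dots> \<le> integral\<^sup>L ?M \<Psi>"
    by (rule Bochner_Integration.integral_mono[OF Bochner_Integration.integrable_diff[OF f1int f2int] Psiint pw])
  also have "\<dots> \<le> K1 * (1 / b1) ^ r + K2 * (1 / b2) ^ r" by (rule Psival)
  also have "\<dots> \<le> (2 / real r) ^ r * exp (- (real r powr (1/3)) / 10)"
    using num(5) by (simp add: K1_def K2_def)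
  finally show "PD F g I - PC F g I (C1 F I) \<le> (2 / real r) ^ r * exp (- (real r powr (1/3)) / 10)" .
qed

end
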